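(* Let $(v_n)$ be a uniformly bounded sequence of weakly increasing functions $v_n:\mathbb{R}\to u([\underline w,\infty))$ such that, for every $n$, $\mathbb{E}_{a^*}[v_n(L_n)]-c(a^* )\ge\mathbb{E}_{\hat a}[v_n(L_n)]-c(\hat a)$. Then $\mathrm{Var}_{a^*}[v_n(L_n)]\ge\exp[-\mathrm{KL}(\mu_{\hat a},\mu_{a^*})n+o(n)]$, i.e. $\liminf_{n\to\infty}\frac1n\log\mathrm{Var}_{a^*}[v_n(L_n)]\ge-\mathrm{KL}(\mu_{\hat a},\mu_{a^*})$.
   Context: Two actions $a^*\neq\hat a$ with costs $c(\hat a)<c(a^* )$, and Borel probability measures $\mu_{a^*}\neq\mu_{\hat a}$ on a signal space $X$ (subset of a Euclidean space), mutually absolutely continuous, with $\int(\frac{d\mu_{a'}}{d\mu_a})^\lambda d\mu_a<\infty$ for all $\lambda>0$, $a,a'\in\{a^*,\hat a\}$. Under action $a$, $x_1,\dots,x_n$ are i.i.d. from $\mu_a$ with expectation and variance $\mathbb{E}_a,\mathrm{Var}_a$. $L_n:=\frac1n\sum_{i=1}^n\log\frac{d\mu_{a^*}}{d\mu_{\hat a}}(x_i)$. $u:[\underline w,\infty)\to\mathbb{R}$ is the agent's (strictly increasing) utility. $\mathrm{KL}(\nu,\nu')=\int\log\frac{d\nu}{d\nu'}d\nu$. *)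

theory Defs
  imports "HOL-Probability.Probability"
begin

text \<open>Log-likelihood ratio log (d mu_star / d mu_hat)(x); RN_deriv M N is the density dN/dM.\<close>
definition llr :: "'a measure \<Rightarrow> 'a measure \<Rightarrow> 'a \<Rightarrow> real" where
  "llr Mstar Mhat x = ln (enn2real (RN_deriv Mhat Mstar x))"

definition Ln :: "'a measure \<Rightarrow> 'a measure \<Rightarrow> nat \<Rightarrow> (nat \<Rightarrow> 'a) \<Rightarrow> real" where
  "Ln Mstar Mhat n xs = (\<Sum>i<n. llr Mstar Mhat (xs i)) / real n"

definition sample :: "nat \<Rightarrow> 'a measure \<Rightarrow> (nat \<Rightarrow> 'a) measure" where
  "sample n M = PiM {..<n} (\<lambda>_. M)"

definition var :: "'b measure \<Rightarrow> ('b \<Rightarrow> real) \<Rightarrow> real" where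
  "var M f = (\<integral>x. (f x - (\<integral>y. f y \<partial>M))\<^sup>2 \<partial>M)"

end

theory Submission
  imports Defs
begin

lemma exp_taylor2: "exp (t::real) \<le> 1 + t + t\<^sup>2 * exp \<bar>t\<bar>"
proof (cases "t \<ge> 0")
  case True
  show ?thesis
  proof (cases "t \<le> 1")
    case True
    have "exp t \<le> 1 + t + t\<^sup>2" using exp_bound[of t] \<open>t\<ge>0\<close> True by simp
    moreover have "t\<^sup>2 \<le> t\<^sup>2 * exp \<bar>t\<bar>" using mult_left_mono[of 1 "exp \<bar>t\<bar>" "t\<^sup>2"] by simp
    ultimately show ?thesis by linarith
  next
    case False
    have "1 * 1 \<le> t * t" using False by (intro mult_mono) auto
    then have "1 \<le> t\<^sup>2" by (simp add: power2_eq_square)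
    hence "exp t \<le> t\<^sup>2 * exp t" using mult_right_mono[of 1 "t\<^sup>2" "exp t"] by simp
    moreover have "\<bar>t\<bar> = t" using \<open>t\<ge>0\<close> by simp
    ultimately have "exp t \<le> 1 + t + t\<^sup>2 * exp t" "\<bar>t\<bar> = t" using \<open>t\<ge>0\<close> by linarith+
    then show ?thesis by simp
  qed
next
  case False
  show ?thesis
  proof (cases "t \<ge> -1")
    case True
    have e: "exp (-t) \<ge> 1 - t" using exp_ge_add_one_self[of "-t"] by simp
    have "exp t = 1 / exp (-t)" by (simp add: exp_minus field_simps)
    also have "\<dots> \<le> 1 / (1 - t)" using e False by (intro divide_left_mono) auto
    also have "\<dots> \<le> 1 + t + t\<^sup>2"
    proof -
      have "(1 - t) * (1 + t + t\<^sup>2) = 1 - t^3" by (simp add: algebra_simps power2_eq_square power3_eq_cube)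
      moreover have "t^3 \<le> 0" using mult_nonneg_nonpos[of "t*t" t] False by (simp add: power3_eq_cube)
      ultimately have "1 \<le> (1 - t) * (1 + t + t\<^sup>2)" by simp
      thus ?thesis using False by (simp add: field_simps)
    qed
    finally have "exp t \<le> 1 + t + t\<^sup>2" .
    moreover have "t\<^sup>2 \<le> t\<^sup>2 * exp \<bar>t\<bar>" using mult_left_mono[of 1 "exp \<bar>t\<bar>" "t\<^sup>2"] by simp
    ultimately show ?thesis by linarith
  next
    case F2: False
    have "exp t \<le> 1" using False by simp
    moreover have "t + t\<^sup>2 \<ge> 0" using mult_nonneg_nonneg[of "-t" "-t-1"] F2 by (simp add: power2_eq_square algebra_simps)
    moreover have "t\<^sup>2 * exp \<bar>t\<bar> \<ge> t\<^sup>2" using mult_left_mono[of 1 "exp \<bar>t\<bar>" "t\<^sup>2"] by simp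
    ultimately show ?thesis by linarith
  qed
qed

lemma le_cube: "(s::real) \<ge> 1 \<Longrightarrow> s \<le> s^3"
proof -
  assume a: "s \<ge> 1"
  have "1 * 1 \<le> s * s" using a by (intro mult_mono) auto
  then have "s * 1 \<le> s * (s * s)" using a by (intro mult_left_mono) auto
  then show ?thesis by (simp add: power3_eq_cube)
qed

lemma pt_bounds:
  fixes s :: real
  assumes s: "s > 0"
  shows "\<bar>ln s\<bar> \<le> 1 + s^3 + (1/s)^3"
    and "(ln s)\<^sup>2 * exp \<bar>ln s\<bar> \<le> s^3 + (1/s)^3"
    and "0 < \<theta> \<Longrightarrow> \<theta> \<le> 1 \<Longrightarrow> \<bar>s powr \<theta>\<bar> \<le> 1 + s^3 + (1/s)^3"
proof -
  have p3: "(1/s)^3 \<ge> 0" "s^3 \<ge> 0" using s by auto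
  have A: "\<bar>ln s\<bar> \<le> s^3 + (1/s)^3 \<and> (ln s)\<^sup>2 * exp \<bar>ln s\<bar> \<le> s^3 + (1/s)^3"
  proof (cases "s \<ge> 1")
    case True
    have l0: "ln s \<ge> 0" using True by simp
    have l1: "ln s \<le> s" using ln_le_minus_one[OF s] by simp
    have e: "exp \<bar>ln s\<bar> = s" using l0 s by simp
    have "s \<le> s^3" using True by (rule le_cube)
    moreover have "(ln s)\<^sup>2 \<le> s\<^sup>2" using l0 l1 by (intro power_mono) auto
    then have "(ln s)\<^sup>2 * s \<le> s\<^sup>2 * s" using s by (intro mult_right_mono) auto
    then have "(ln s)\<^sup>2 * s \<le> s^3" by (simp add: power2_eq_square power3_eq_cube)
    then have "(ln s)\<^sup>2 * exp \<bar>ln s\<bar> \<le> s^3" using e by simp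
    moreover have "\<bar>ln s\<bar> = ln s" using l0 by simp
    ultimately show ?thesis using l1 p3 \<open>s \<le> s^3\<close> by linarith
  next
    case False
    let ?u = "1/s"
    have u1: "?u > 1" using False s by (simp add: field_simps)
    have lu: "ln s = - ln ?u" using s by (simp add: ln_div)
    have l0: "ln ?u \<ge> 0" using u1 by simp
    have l1: "ln ?u \<le> ?u" using ln_le_minus_one[of ?u] u1 s by simp
    have e: "exp \<bar>ln s\<bar> = ?u" using l0 u1 lu s by simp
    have "?u \<le> ?u^3" using u1 by (intro le_cube) auto
    moreover have "(ln ?u)\<^sup>2 \<le> ?u\<^sup>2" using l0 l1 by (intro power_mono) auto
    then have "(ln ?u)\<^sup>2 * ?u \<le> ?u\<^sup>2 * ?u" using u1 s by (intro mult_right_mono) auto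
    then have "(ln ?u)\<^sup>2 * ?u \<le> ?u^3" by (simp add: power2_eq_square power3_eq_cube)
    then have "(ln s)\<^sup>2 * exp \<bar>ln s\<bar> \<le> ?u^3" using e lu by simp
    moreover have "\<bar>ln s\<bar> = ln ?u" using l0 lu by simp
    ultimately show ?thesis using l1 p3 s \<open>?u \<le> ?u^3\<close> by linarith
  qed
  then show "\<bar>ln s\<bar> \<le> 1 + s^3 + (1/s)^3" "(ln s)\<^sup>2 * exp \<bar>ln s\<bar> \<le> s^3 + (1/s)^3" by auto
  assume th: "0 < \<theta>" "\<theta> \<le> 1"
  show "\<bar>s powr \<theta>\<bar> \<le> 1 + s^3 + (1/s)^3"
  proof (cases "s \<le> 1")
    case True
    then have "s powr \<theta> \<le> 1" using s th by (intro powr_le1) auto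
    moreover have "\<bar>s powr \<theta>\<bar> = s powr \<theta>" by simp
    ultimately show ?thesis using p3 by linarith
  next
    case False
    then have "s powr \<theta> \<le> s powr 1" using th by (intro powr_mono) auto
    also have "\<dots> = s" using s by simp
    also have "s \<le> s^3" using False by (intro le_cube) auto
    finally have "s powr \<theta> \<le> s^3" .
    moreover have "\<bar>s powr \<theta>\<bar> = s powr \<theta>" by simp
    ultimately show ?thesis using p3 by linarith
  qed
qed

lemma RN_facts:
  assumes P1: "prob_space M1" and P0: "prob_space M0" and S: "sets M1 = sets M0"
    and ac1: "absolutely_continuous M1 M0" and ac0: "absolutely_continuous M0 M1"
  shows "M1 = density M0 (RN_deriv M0 M1)" "M0 = density M1 (RN_deriv M1 M0)"
    "AE x in M1. RN_deriv M1 M0 x = ennreal (enn2real (RN_deriv M1 M0 x)) \<and> enn2real (RN_deriv M1 M0 x) > 0"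
    "AE x in M0. RN_deriv M1 M0 x = ennreal (enn2real (RN_deriv M1 M0 x)) \<and> enn2real (RN_deriv M1 M0 x) > 0
       \<and> RN_deriv M0 M1 x = ennreal (1 / enn2real (RN_deriv M1 M0 x))"
proof -
  interpret A: prob_space M1 by fact
  interpret B: prob_space M0 by fact
  show d1: "M1 = density M0 (RN_deriv M0 M1)"
    using B.density_RN_deriv[OF ac0 S] by simp
  show d0: "M0 = density M1 (RN_deriv M1 M0)"
    using A.density_RN_deriv[OF ac1 S[symmetric]] by simp
  let ?s = "RN_deriv M1 M0" and ?r = "RN_deriv M0 M1"
  have mr: "?r \<in> borel_measurable M1"
    using borel_measurable_RN_deriv[of M0 M1] measurable_cong_sets[OF S refl] by blast
  have "density M1 (\<lambda>x. ?s x * ?r x) = density (density M1 ?s) ?r"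
    using density_density_eq[OF borel_measurable_RN_deriv mr] by simp
  also have "\<dots> = M1" using d0 d1
    by (metis density_cong sets_density)
  also have "\<dots> = density M1 (\<lambda>_. 1)" by (simp add: density_1)
  finally have "density M1 (\<lambda>x. ?s x * ?r x) = density M1 (\<lambda>_. 1)" .
  moreover have "sigma_finite_measure (density M1 (\<lambda>_. 1))"
    by (simp add: density_1 A.sigma_finite_measure_axioms)
  ultimately have ae: "AE x in M1. ?s x * ?r x = 1"
    using sigma_finite_density_unique[of "\<lambda>_. 1" M1 "\<lambda>x. ?s x * ?r x"] mr
    by simp
  have key: "a * b = 1 \<Longrightarrow> a = ennreal (enn2real a) \<and> enn2real a > 0 \<and> b = ennreal (1 / enn2real a)"
    for a b :: ennreal
  proof -
    assume ab: "a * b = 1"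
    have "a \<noteq> \<infinity>" "b \<noteq> \<infinity>" "a \<noteq> 0" using ab by (auto simp: ennreal_top_mult ennreal_mult_top split: if_splits)
    moreover have "enn2real a * enn2real b = 1" using ab by (metis enn2real_1 enn2real_mult)
    moreover have "enn2real a \<noteq> 0" using calculation by auto
    moreover have "enn2real b = 1 / enn2real a" using calculation by (simp add: field_simps)
    ultimately show ?thesis
      using enn2real_nonneg[of a] by (auto simp: ennreal_enn2real less_top[symmetric] order.strict_iff_order)
  qed
  show "AE x in M1. ?s x = ennreal (enn2real (?s x)) \<and> enn2real (?s x) > 0"
    using ae by eventually_elim (use key in blast)
  then have "AE x in M1. ?s x = ennreal (enn2real (?s x)) \<and> enn2real (?s x) > 0
       \<and> ?r x = ennreal (1 / enn2real (?s x))"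
    using ae by eventually_elim (use key in blast)
  then show "AE x in M0. ?s x = ennreal (enn2real (?s x)) \<and> enn2real (?s x) > 0
       \<and> ?r x = ennreal (1 / enn2real (?s x))"
    by (subst d0) (auto simp: AE_density)
qed

lemma PiM_density_prod:
  fixes M0 :: "'a measure" and \<rho> :: "'a \<Rightarrow> ennreal"
  assumes P0: "prob_space M0" and P1: "prob_space (density M0 \<rho>)"
    and m: "\<rho> \<in> borel_measurable M0" and fin: "finite I"
  shows "PiM I (\<lambda>_. density M0 \<rho>) = density (PiM I (\<lambda>_. M0)) (\<lambda>x. \<Prod>i\<in>I. \<rho> (x i))"
proof -
  interpret S1: product_sigma_finite "\<lambda>_. density M0 \<rho>"
    using P1 unfolding product_sigma_finite_def by (simp add: prob_space_imp_sigma_finite)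
  interpret S0: product_sigma_finite "\<lambda>_. M0"
    using P0 unfolding product_sigma_finite_def by (simp add: prob_space_imp_sigma_finite)
  have mR: "(\<lambda>x. \<Prod>i\<in>I. \<rho> (x i)) \<in> borel_measurable (PiM I (\<lambda>_. M0))"
    using m by measurable
  show ?thesis
  proof (rule S1.PiM_eqI[symmetric, OF fin])
    show "sets (density (PiM I (\<lambda>_. M0)) (\<lambda>x. \<Prod>i\<in>I. \<rho> (x i))) = sets (PiM I (\<lambda>_. density M0 \<rho>))"
      unfolding sets_density by (rule sets_PiM_cong) auto
  next
    fix A assume A: "\<And>i. i \<in> I \<Longrightarrow> A i \<in> sets (density M0 \<rho>)"
    then have A': "\<And>i. i \<in> I \<Longrightarrow> A i \<in> sets M0" by simp
    have PiA: "Pi\<^sub>E I A \<in> sets (PiM I (\<lambda>_. M0))"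
      using A' by (intro sets_PiM_I_finite fin) auto
    have "emeasure (density (PiM I (\<lambda>_. M0)) (\<lambda>x. \<Prod>i\<in>I. \<rho> (x i))) (Pi\<^sub>E I A)
        = (\<integral>\<^sup>+ x. (\<Prod>i\<in>I. \<rho> (x i)) * indicator (Pi\<^sub>E I A) x \<partial>PiM I (\<lambda>_. M0))"
      using mR PiA by (simp add: emeasure_density)
    also have "\<dots> = (\<integral>\<^sup>+ x. (\<Prod>i\<in>I. \<rho> (x i) * indicator (A i) (x i)) \<partial>PiM I (\<lambda>_. M0))"
    proof (rule nn_integral_cong)
      fix x assume x: "x \<in> space (PiM I (\<lambda>_. M0))"
      then have ext: "x \<in> extensional I" by (simp add: space_PiM PiE_def)
      show "(\<Prod>i\<in>I. \<rho> (x i)) * indicator (Pi\<^sub>E I A) x = (\<Prod>i\<in>I. \<rho> (x i) * indicator (A i) (x i))"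
      proof (cases "x \<in> Pi\<^sub>E I A")
        case True
        then show ?thesis by (auto simp: indicator_def PiE_def Pi_def intro!: prod.cong)
      next
        case False
        then obtain j where j: "j \<in> I" "x j \<notin> A j" using ext by (auto simp: PiE_def Pi_def)
        then have "(\<Prod>i\<in>I. \<rho> (x i) * indicator (A i) (x i)) = 0"
          using fin by (intro prod_zero bexI[of _ j]) auto
        then show ?thesis using False by simp
      qed
    qed
    also have "\<dots> = (\<Prod>i\<in>I. \<integral>\<^sup>+ y. \<rho> y * indicator (A i) y \<partial>M0)"
      using A' m by (intro S0.product_nn_integral_prod fin) auto
    also have "\<dots> = (\<Prod>i\<in>I. emeasure (density M0 \<rho>) (A i))"
      using A' m by (intro prod.cong refl) (simp add: emeasure_density)
    finally show "emeasure (density (PiM I (\<lambda>_. M0)) (\<lambda>x. \<Prod>i\<in>I. \<rho> (x i))) (Pi\<^sub>E I A)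
        = (\<Prod>i\<in>I. emeasure (density M0 \<rho>) (A i))" .
  qed
qed

lemma amgm_aux:
  fixes a y t T :: real
  assumes "a \<ge> 0" "y > 0" "t > 0" "1 / y \<le> T"
  shows "a \<le> t / 2 * (a\<^sup>2 * y) + T / (2 * t)"
proof -
  have "t / 2 * (a\<^sup>2 * y) + 1 / (2 * t * y) - a = (t * y * a - 1)\<^sup>2 / (2 * t * y)"
    using assms by (simp add: field_simps power2_eq_square)
  also have "\<dots> \<ge> 0" using assms by simp
  finally have "a \<le> t / 2 * (a\<^sup>2 * y) + 1 / (2 * t * y)" by simp
  moreover have "1 / (2 * t * y) \<le> T / (2 * t)"
  proof -
    have "1 / (2 * t * y) = (1 / y) / (2 * t)" by (simp add: field_simps)
    also have "\<dots> \<le> T / (2 * t)" using assms by (intro divide_right_mono) auto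
    finally show ?thesis .
  qed
  ultimately show ?thesis by linarith
qed

lemma core_ineq:
  fixes P0 P1 :: "'b measure" and R :: "'b \<Rightarrow> ennreal" and Q f :: "'b \<Rightarrow> real"
  assumes P0: "prob_space P0" and P1: "prob_space P1" and P1d: "P1 = density P0 R"
    and mR: "R \<in> borel_measurable P0" and mQ: "Q \<in> borel_measurable P0"
    and mf: "f \<in> borel_measurable P0"
    and fb: "\<And>x. \<bar>f x\<bar> \<le> B"
    and ae: "AE x in P0. 0 < Q x \<and> R x = ennreal (1 / Q x)"
    and T: "T > 0" and t: "t > 0"
    and IC: "\<Delta> \<le> (\<integral>x. f x \<partial>P1) - (\<integral>x. f x \<partial>P0)"
  shows "\<Delta> \<le> t / 2 * var P1 f + T / (2 * t) + 2 * B * measure P0 {x\<in>space P0. T < Q x}"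
proof -
  interpret I0: prob_space P0 by fact
  interpret I1: prob_space P1 by fact
  have sets1: "sets P1 = sets P0" using P1d by simp
  have mf1: "f \<in> borel_measurable P1" using mf measurable_cong_sets[OF sets1 refl] by blast
  have B0: "B \<ge> 0" using fb[of undefined] by simp
  have if0: "integrable P0 f" using mf fb by (intro I0.integrable_const_bound[where B=B]) auto
  have if1: "integrable P1 f" using mf1 fb by (intro I1.integrable_const_bound[where B=B]) auto
  define m1 where "m1 = (\<integral>x. f x \<partial>P1)"
  define g where "g x = f x - m1" for x
  have m1b: "\<bar>m1\<bar> \<le> B"
  proof -
    have "\<bar>m1\<bar> \<le> (\<integral>x. \<bar>f x\<bar> \<partial>P1)" unfolding m1_def by (rule integral_abs_bound)
    also have "\<dots> \<le> (\<integral>x. B \<partial>P1)" using if1 fb by (intro integral_mono) auto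
    finally show ?thesis by (simp add: I1.prob_space)
  qed
  have gb: "\<bar>g x\<bar> \<le> 2 * B" for x using fb[of x] m1b unfolding g_def by linarith
  have mg: "g \<in> borel_measurable P0" unfolding g_def using mf by measurable
  have mg1: "g \<in> borel_measurable P1" unfolding g_def using mf1 by measurable
  define Ac where "Ac = {x\<in>space P0. T < Q x}"
  have mAc: "Ac \<in> sets P0" unfolding Ac_def using mQ by measurable
  have ig0: "integrable P0 g" unfolding g_def using if0 by auto
  have "(\<integral>x. g x \<partial>P0) = (\<integral>x. f x \<partial>P0) - m1" unfolding g_def using if0 by (simp add: I0.prob_space)
  then have "\<Delta> \<le> - (\<integral>x. g x \<partial>P0)" using IC unfolding m1_def by simp
  also have "\<dots> \<le> (\<integral>x. \<bar>g x\<bar> \<partial>P0)" using integral_abs_bound[of P0 g] abs_ge_minus_self[of "\<integral>x. g x \<partial>P0"] by linarith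
  finally have D1: "\<Delta> \<le> (\<integral>x. \<bar>g x\<bar> \<partial>P0)" .
  have "ennreal (\<integral>x. \<bar>g x\<bar> \<partial>P0) = (\<integral>\<^sup>+x. ennreal \<bar>g x\<bar> \<partial>P0)"
    using ig0 by (intro nn_integral_eq_integral[symmetric]) auto
  also have "\<dots> \<le> (\<integral>\<^sup>+x. ennreal (t/2) * (ennreal ((g x)\<^sup>2) * R x)
        + ennreal (T / (2 * t) + 2 * B * indicator Ac x) \<partial>P0)"
  proof (rule nn_integral_mono_AE)
    show "AE x in P0. ennreal \<bar>g x\<bar> \<le> ennreal (t/2) * (ennreal ((g x)\<^sup>2) * R x)
        + ennreal (T / (2 * t) + 2 * B * indicator Ac x)"
      using ae AE_space
    proof eventually_elim
      case (elim x)
      have Rx: "R x = ennreal (1 / Q x)" and Qx: "Q x > 0" using elim by auto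
      have real: "\<bar>g x\<bar> \<le> t/2 * ((g x)\<^sup>2 * (1 / Q x)) + (T / (2 * t) + 2 * B * indicator Ac x)"
      proof (cases "x \<in> Ac")
        case True
        have "0 \<le> t/2 * ((g x)\<^sup>2 * (1 / Q x))" using t Qx by simp
        moreover have "0 \<le> T / (2 * t)" using T t by simp
        ultimately show ?thesis using True gb[of x] by simp
      next
        case False
        have "Q x \<le> T" using False elim unfolding Ac_def by auto
        show ?thesis using amgm_aux[of "\<bar>g x\<bar>" "1 / Q x" t T] Qx t T B0 \<open>Q x \<le> T\<close> False
          by (simp add: indicator_def)
      qed
      show ?case unfolding Rx using t T B0 Qx real
        by (simp add: ennreal_mult[symmetric] ennreal_plus[symmetric] ennreal_leI del: ennreal_plus)
    qed
  qed
  also have "\<dots> = ennreal (t/2) * (\<integral>\<^sup>+x. ennreal ((g x)\<^sup>2) * R x \<partial>P0)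
      + (\<integral>\<^sup>+x. ennreal (T / (2 * t)) + ennreal (2 * B) * indicator Ac x \<partial>P0)"
  proof -
    have m1': "(\<lambda>x. ennreal (t/2) * (ennreal ((g x)\<^sup>2) * R x)) \<in> borel_measurable P0"
      using mg mR by measurable
    have m2': "(\<lambda>x. ennreal (T / (2 * t)) + ennreal (2 * B) * indicator Ac x) \<in> borel_measurable P0"
      using mAc by measurable
    have eq: "ennreal (T / (2 * t) + 2 * B * indicator Ac x) = ennreal (T / (2 * t)) + ennreal (2 * B) * indicator Ac x" for x
      using T t B0 by (simp add: ennreal_plus[symmetric] ennreal_mult[symmetric] indicator_def del: ennreal_plus)
    have m3: "(\<lambda>x. ennreal ((g x)\<^sup>2) * R x) \<in> borel_measurable P0" using mg mR by measurable
    show ?thesis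
      unfolding eq nn_integral_add[OF m1' m2'] nn_integral_cmult[OF m3] ..
  qed
  also have "(\<integral>\<^sup>+x. ennreal ((g x)\<^sup>2) * R x \<partial>P0) = ennreal (var P1 f)"
  proof -
    have "(\<integral>\<^sup>+x. ennreal ((g x)\<^sup>2) * R x \<partial>P0) = (\<integral>\<^sup>+x. R x * ennreal ((g x)\<^sup>2) \<partial>P0)"
      by (simp add: mult.commute)
    also have "\<dots> = (\<integral>\<^sup>+x. ennreal ((g x)\<^sup>2) \<partial>P1)"
      unfolding P1d using mR mg by (intro nn_integral_density[symmetric]) auto
    also have "\<dots> = ennreal (\<integral>x. (g x)\<^sup>2 \<partial>P1)"
    proof (rule nn_integral_eq_integral)
      show "integrable P1 (\<lambda>x. (g x)\<^sup>2)"
      proof (rule I1.integrable_const_bound[where B="(2*B)\<^sup>2"])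
        show "AE x in P1. norm ((g x)\<^sup>2) \<le> (2*B)\<^sup>2"
        proof (intro AE_I2)
          fix x
          have "\<bar>g x\<bar>\<^sup>2 \<le> (2*B)\<^sup>2" using gb[of x] by (intro power_mono) auto
          then show "norm ((g x)\<^sup>2) \<le> (2*B)\<^sup>2" by simp
        qed
      qed (use mg1 in measurable)
    qed auto
    also have "(\<integral>x. (g x)\<^sup>2 \<partial>P1) = var P1 f" unfolding var_def g_def m1_def ..
    finally show ?thesis .
  qed
  also have "(\<integral>\<^sup>+x. ennreal (T / (2 * t)) + ennreal (2 * B) * indicator Ac x \<partial>P0)
     = ennreal (T / (2 * t)) + ennreal (2 * B) * ennreal (measure P0 Ac)"
    using mAc by (simp add: nn_integral_add nn_integral_cmult I0.emeasure_eq_measure I0.prob_space)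
  finally have "ennreal (\<integral>x. \<bar>g x\<bar> \<partial>P0) \<le> ennreal (t / 2 * var P1 f + T / (2 * t) + 2 * B * measure P0 Ac)"
  proof -
    assume a: "ennreal (\<integral>x. \<bar>g x\<bar> \<partial>P0) \<le> ennreal (t / 2) * ennreal (var P1 f) +
      (ennreal (T / (2 * t)) + ennreal (2 * B) * ennreal (measure P0 Ac))"
    have v0: "var P1 f \<ge> 0" unfolding var_def by simp
    show ?thesis using a t T B0 v0
      by (simp add: ennreal_plus[symmetric] ennreal_mult[symmetric] del: ennreal_plus)
  qed
  then have "(\<integral>x. \<bar>g x\<bar> \<partial>P0) \<le> t / 2 * var P1 f + T / (2 * t) + 2 * B * measure P0 Ac"
    using t T B0 by (subst (asm) ennreal_le_iff) (auto simp: var_def)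
  with D1 show ?thesis unfolding Ac_def by simp
qed

lemma markov_prod:
  fixes M0 :: "'a measure" and s :: "'a \<Rightarrow> real"
  assumes P0: "prob_space M0" and ms: "s \<in> borel_measurable M0" and s0: "\<And>x. s x \<ge> 0"
    and th: "\<theta> > 0" and int: "integrable M0 (\<lambda>x. s x powr \<theta>)"
  shows "measure (PiM {..<n} (\<lambda>_. M0)) {xs\<in>space (PiM {..<n} (\<lambda>_. M0)). exp (real n * c) < (\<Prod>i<n. s (xs i))}
     \<le> ((\<integral>x. s x powr \<theta> \<partial>M0) / exp (\<theta> * c)) ^ n"
proof -
  interpret I0: prob_space M0 by fact
  interpret S0: product_sigma_finite "\<lambda>_. M0"
    using P0 unfolding product_sigma_finite_def by (simp add: prob_space_imp_sigma_finite)
  interpret PP: prob_space "PiM {..<n} (\<lambda>_. M0)"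
    by (intro prob_space_PiM) (simp add: P0)
  let ?P = "PiM {..<n} (\<lambda>_. M0)"
  define Ac where "Ac = {xs\<in>space ?P. exp (real n * c) < (\<Prod>i<n. s (xs i))}"
  define \<phi> where "\<phi> = (\<integral>x. s x powr \<theta> \<partial>M0)"
  have phi0: "\<phi> \<ge> 0" unfolding \<phi>_def by simp
  have mAc: "Ac \<in> sets ?P" unfolding Ac_def using ms by measurable
  have pw: "ennreal (exp (real n * c * \<theta>)) * indicator Ac xs \<le> (\<Prod>i<n. ennreal (s (xs i) powr \<theta>))" for xs
  proof (cases "xs \<in> Ac")
    case True
    then have "exp (real n * c) \<le> (\<Prod>i<n. s (xs i))" unfolding Ac_def by auto
    then have "exp (real n * c) powr \<theta> \<le> (\<Prod>i<n. s (xs i)) powr \<theta>"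
      using th by (intro powr_mono2) auto
    then have "exp (real n * c * \<theta>) \<le> (\<Prod>i<n. s (xs i) powr \<theta>)"
      by (simp add: exp_powr_real prod_powr_distrib)
    then show ?thesis using True by (simp add: prod_ennreal ennreal_leI)
  qed simp
  have "ennreal (exp (real n * c * \<theta>)) * emeasure ?P Ac = (\<integral>\<^sup>+xs. ennreal (exp (real n * c * \<theta>)) * indicator Ac xs \<partial>?P)"
    using mAc by (simp add: nn_integral_cmult_indicator)
  also have "\<dots> \<le> (\<integral>\<^sup>+xs. (\<Prod>i<n. ennreal (s (xs i) powr \<theta>)) \<partial>?P)"
    by (intro nn_integral_mono pw)
  also have "\<dots> = (\<Prod>i<n. \<integral>\<^sup>+x. ennreal (s x powr \<theta>) \<partial>M0)"
    using ms by (intro S0.product_nn_integral_prod) auto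
  also have "\<dots> = ennreal (\<phi> ^ n)"
  proof -
    have "(\<integral>\<^sup>+x. ennreal (s x powr \<theta>) \<partial>M0) = ennreal \<phi>"
      unfolding \<phi>_def using int by (intro nn_integral_eq_integral) auto
    then show ?thesis using phi0 by (simp add: prod_ennreal ennreal_power)
  qed
  finally have "ennreal (exp (real n * c * \<theta>) * measure ?P Ac) \<le> ennreal (\<phi> ^ n)"
    by (simp add: PP.emeasure_eq_measure ennreal_mult[symmetric])
  then have "exp (real n * c * \<theta>) * measure ?P Ac \<le> \<phi> ^ n"
    using phi0 by (simp add: ennreal_le_iff)
  then have "measure ?P Ac \<le> \<phi> ^ n / exp (real n * c * \<theta>)"
    by (simp add: field_simps)
  also have "\<dots> = (\<phi> / exp (\<theta> * c)) ^ n"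
    by (simp add: power_divide exp_of_nat_mult[symmetric] mult.commute mult.left_commute)
  finally show ?thesis unfolding Ac_def \<phi>_def .
qed

lemma exists_theta:
  fixes M0 :: "'a measure" and s :: "'a \<Rightarrow> real"
  assumes P0: "prob_space M0" and ms: "s \<in> borel_measurable M0"
    and spos: "AE x in M0. s x > 0"
    and i3: "integrable M0 (\<lambda>x. s x ^ 3)" and j3: "integrable M0 (\<lambda>x. (1 / s x) ^ 3)"
    and e: "\<epsilon> > 0"
  shows "integrable M0 (\<lambda>x. ln (s x))"
    and "\<exists>\<theta>>0. \<theta> \<le> 1 \<and> integrable M0 (\<lambda>x. s x powr \<theta>) \<and>
           (\<integral>x. s x powr \<theta> \<partial>M0) < exp (\<theta> * ((\<integral>x. ln (s x) \<partial>M0) + \<epsilon>))"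
proof -
  interpret I0: prob_space M0 by fact
  define H where "H x = 1 + s x ^ 3 + (1 / s x) ^ 3" for x
  have iH: "integrable M0 H" unfolding H_def using i3 j3 by auto
  have nH: "norm (H x) = H x" if "s x > 0" for x
    unfolding H_def using that by simp
  show il: "integrable M0 (\<lambda>x. ln (s x))"
  proof (rule Bochner_Integration.integrable_bound[OF iH])
    show "AE x in M0. norm (ln (s x)) \<le> norm (H x)"
      using spos
    proof eventually_elim
      case (elim x)
      have "\<bar>ln (s x)\<bar> \<le> H x" unfolding H_def by (rule pt_bounds(1)[OF elim])
      then show ?case using nH[OF elim] by simp
    qed
  qed (use ms in measurable)
  have ip: "integrable M0 (\<lambda>x. s x powr \<theta>)" if "0 < \<theta>" "\<theta> \<le> 1" for \<theta>
  proof (rule Bochner_Integration.integrable_bound[OF iH])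
    show "AE x in M0. norm (s x powr \<theta>) \<le> norm (H x)"
      using spos
    proof eventually_elim
      case (elim x)
      have "\<bar>s x powr \<theta>\<bar> \<le> H x" unfolding H_def by (rule pt_bounds(3)[OF elim that])
      then show ?case using nH[OF elim] by simp
    qed
  qed (use ms in measurable)
  define h where "h x = (ln (s x))\<^sup>2 * exp \<bar>ln (s x)\<bar>" for x
  have ih: "integrable M0 h"
  proof (rule Bochner_Integration.integrable_bound[OF iH])
    show "AE x in M0. norm (h x) \<le> norm (H x)"
      using spos
    proof eventually_elim
      case (elim x)
      have "h x \<le> s x ^ 3 + (1 / s x) ^ 3" unfolding h_def using pt_bounds(2)[OF elim] .
      moreover have "h x \<ge> 0" unfolding h_def by simp
      ultimately show ?case using nH[OF elim] unfolding H_def by simp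
    qed
  qed (unfold h_def, use ms in measurable)
  define K where "K = (\<integral>x. ln (s x) \<partial>M0)"
  define C where "C = (\<integral>x. h x \<partial>M0)"
  have C0: "C \<ge> 0" unfolding C_def h_def by simp
  define \<theta> where "\<theta> = min 1 (\<epsilon> / (2 * (C + 1)))"
  have th0: "\<theta> > 0" unfolding \<theta>_def using e C0 by simp
  have th1: "\<theta> \<le> 1" unfolding \<theta>_def by simp
  have thC: "\<theta> * C \<le> \<epsilon> / 2"
  proof -
    have "\<theta> * C \<le> (\<epsilon> / (2 * (C + 1))) * C" unfolding \<theta>_def using C0 by (intro mult_right_mono) auto
    also have "\<dots> \<le> \<epsilon> / 2" using C0 e by (simp add: field_simps)
    finally show ?thesis .
  qed
  have pw: "AE x in M0. s x powr \<theta> \<le> 1 + \<theta> * ln (s x) + \<theta>\<^sup>2 * h x"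
    using spos
  proof eventually_elim
    case (elim x)
    let ?y = "ln (s x)"
    have "s x powr \<theta> = exp (\<theta> * ?y)" using elim by (simp add: powr_def)
    also have "\<dots> \<le> 1 + \<theta> * ?y + (\<theta> * ?y)\<^sup>2 * exp \<bar>\<theta> * ?y\<bar>" by (rule exp_taylor2)
    also have "(\<theta> * ?y)\<^sup>2 * exp \<bar>\<theta> * ?y\<bar> \<le> \<theta>\<^sup>2 * h x"
    proof -
      have "\<bar>\<theta> * ?y\<bar> \<le> \<bar>?y\<bar>" using th0 th1 by (simp add: abs_mult mult_left_le_one_le)
      then have "exp \<bar>\<theta> * ?y\<bar> \<le> exp \<bar>?y\<bar>" by simp
      then have "(\<theta> * ?y)\<^sup>2 * exp \<bar>\<theta> * ?y\<bar> \<le> (\<theta> * ?y)\<^sup>2 * exp \<bar>?y\<bar>" by (intro mult_left_mono) auto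
      then show ?thesis unfolding h_def by (simp add: power_mult_distrib)
    qed
    finally show ?case by simp
  qed
  have "(\<integral>x. s x powr \<theta> \<partial>M0) \<le> (\<integral>x. 1 + \<theta> * ln (s x) + \<theta>\<^sup>2 * h x \<partial>M0)"
    using ip[OF th0 th1] il ih pw by (intro integral_mono_AE) auto
  also have "\<dots> = 1 + \<theta> * K + \<theta>\<^sup>2 * C"
    unfolding K_def C_def using il ih by (simp add: I0.prob_space)
  also have "\<dots> < 1 + \<theta> * (K + \<epsilon>)"
  proof -
    have "\<theta>\<^sup>2 * C = \<theta> * (\<theta> * C)" by (simp add: power2_eq_square)
    also have "\<dots> \<le> \<theta> * (\<epsilon> / 2)" using thC th0 by (intro mult_left_mono) auto
    also have "\<dots> < \<theta> * \<epsilon>" using th0 e by simp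
    finally show ?thesis by (simp add: algebra_simps)
  qed
  also have "\<dots> \<le> exp (\<theta> * (K + \<epsilon>))" by (rule exp_ge_add_one_self)
  finally have fin: "(\<integral>x. s x powr \<theta> \<partial>M0) < exp (\<theta> * (K + \<epsilon>))" .
  show "\<exists>\<theta>>0. \<theta> \<le> 1 \<and> integrable M0 (\<lambda>x. s x powr \<theta>) \<and>
           (\<integral>x. s x powr \<theta> \<partial>M0) < exp (\<theta> * ((\<integral>x. ln (s x) \<partial>M0) + \<epsilon>))"
    apply (rule exI[of _ \<theta>])
    using th0 th1 ip[OF th0 th1] fin unfolding K_def by simp
qed

theorem lemma3:
  fixes X :: "'a::euclidean_space set"
    and Mstar Mhat :: "'a measure"
    and cstar chat :: real
    and u :: "real \<Rightarrow> real" and w :: real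
    and v :: "nat \<Rightarrow> real \<Rightarrow> real"
  assumes costs: "chat < cstar"
    and P1: "prob_space Mstar" and P0: "prob_space Mhat"
    and S1: "sets Mstar = sets (restrict_space borel X)" and Sp1: "space Mstar = X"
    and S0: "sets Mhat = sets (restrict_space borel X)" and Sp0: "space Mhat = X"
    and neq: "Mstar \<noteq> Mhat"
    and ac1: "absolutely_continuous Mstar Mhat" and ac0: "absolutely_continuous Mhat Mstar"
    and mom1: "\<And>r::real. r > 0 \<Longrightarrow>
       (\<integral>\<^sup>+ x. ennreal (enn2real (RN_deriv Mhat Mstar x) powr r) \<partial>Mhat) < \<infinity>"
    and mom0: "\<And>r::real. r > 0 \<Longrightarrow>
       (\<integral>\<^sup>+ x. ennreal (enn2real (RN_deriv Mstar Mhat x) powr r) \<partial>Mstar) < \<infinity>"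
    and u_mono: "strict_mono_on {w..} u"
    and v_mono: "\<And>n. mono (v n)"
    and v_range: "\<And>n t. v n t \<in> u ` {w..}"
    and v_bdd: "\<exists>B. \<forall>n t. \<bar>v n t\<bar> \<le> B"
    and IC: "\<And>n. (\<integral>xs. v n (Ln Mstar Mhat n xs) \<partial>sample n Mstar) - cstar
                 \<ge> (\<integral>xs. v n (Ln Mstar Mhat n xs) \<partial>sample n Mhat) - chat"
  shows "\<forall>\<epsilon>>0. \<forall>\<^sub>F n in sequentially.
           var (sample n Mstar) (\<lambda>xs. v n (Ln Mstar Mhat n xs))
             \<ge> exp (- (KL_divergence (exp 1) Mstar Mhat + \<epsilon>) * real n)"
proof (intro allI impI)
  fix \<epsilon> :: real assume e: "\<epsilon> > 0"
  interpret I1: prob_space Mstar by fact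
  interpret I0: prob_space Mhat by fact
  have S: "sets Mstar = sets Mhat" using S1 S0 by simp
  note RN = RN_facts[OF P1 P0 S ac1 ac0]
  define \<rho> where "\<rho> = RN_deriv Mhat Mstar"
  define \<sigma> where "\<sigma> = RN_deriv Mstar Mhat"
  define s where "s x = enn2real (\<sigma> x)" for x
  have d1: "Mstar = density Mhat \<rho>" using RN(1) unfolding \<rho>_def .
  have d0: "Mhat = density Mstar \<sigma>" using RN(2) unfolding \<sigma>_def .
  have ae1: "AE x in Mstar. \<sigma> x = ennreal (s x) \<and> s x > 0" using RN(3) unfolding \<sigma>_def s_def .
  have ae0: "AE x in Mhat. \<sigma> x = ennreal (s x) \<and> s x > 0 \<and> \<rho> x = ennreal (1 / s x)"
    using RN(4) unfolding \<sigma>_def s_def \<rho>_def .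
  have m\<rho>: "\<rho> \<in> borel_measurable Mhat" unfolding \<rho>_def by simp
  have m\<sigma>1: "\<sigma> \<in> borel_measurable Mstar" unfolding \<sigma>_def by simp
  have m\<sigma>: "\<sigma> \<in> borel_measurable Mhat" using m\<sigma>1 measurable_cong_sets[OF S refl] by blast
  have ms: "s \<in> borel_measurable Mhat" unfolding s_def using m\<sigma> by measurable
  have ms1: "s \<in> borel_measurable Mstar" unfolding s_def using m\<sigma>1 by measurable
  have spos: "AE x in Mhat. s x > 0" using ae0 by eventually_elim auto
  have s0: "s x \<ge> 0" for x unfolding s_def by simp
  have i3: "integrable Mhat (\<lambda>x. s x ^ 3)"
  proof (rule integrableI_bounded)
    show "(\<lambda>x. s x ^ 3) \<in> borel_measurable Mhat" using ms by measurable
    have "(\<integral>\<^sup>+x. ennreal (norm (s x ^ 3)) \<partial>Mhat) = (\<integral>\<^sup>+x. ennreal (s x ^ 3) \<partial>Mhat)"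
      using s0 by simp
    also have "\<dots> = (\<integral>\<^sup>+x. ennreal (s x ^ 3) \<partial>density Mstar \<sigma>)" using d0 by simp
    also have "\<dots> = (\<integral>\<^sup>+x. \<sigma> x * ennreal (s x ^ 3) \<partial>Mstar)"
    proof (rule nn_integral_density)
      show "(\<lambda>x. ennreal (s x ^ 3)) \<in> borel_measurable Mstar" using ms1 by measurable
    qed (rule m\<sigma>1)
    also have "\<dots> = (\<integral>\<^sup>+x. ennreal (enn2real (RN_deriv Mstar Mhat x) powr 4) \<partial>Mstar)"
    proof (rule nn_integral_cong_AE)
      show "AE x in Mstar. \<sigma> x * ennreal (s x ^ 3) = ennreal (enn2real (RN_deriv Mstar Mhat x) powr 4)"
        using ae1
      proof eventually_elim
        case (elim x)
        then have "\<sigma> x * ennreal (s x ^ 3) = ennreal (s x ^ 4)"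
          by (simp add: ennreal_mult[symmetric] power_Suc[symmetric] del: power_Suc)
        also have "s x ^ 4 = s x powr 4" using elim by (simp add: powr_numeral)
        finally show ?case unfolding s_def \<sigma>_def .
      qed
    qed
    also have "\<dots> < \<infinity>" by (rule mom0) simp
    finally show "(\<integral>\<^sup>+x. ennreal (norm (s x ^ 3)) \<partial>Mhat) < \<infinity>" .
  qed
  have j3: "integrable Mhat (\<lambda>x. (1 / s x) ^ 3)"
  proof (rule integrableI_bounded)
    show "(\<lambda>x. (1 / s x) ^ 3) \<in> borel_measurable Mhat" using ms by measurable
    have "(\<integral>\<^sup>+x. ennreal (norm ((1 / s x) ^ 3)) \<partial>Mhat) = (\<integral>\<^sup>+x. ennreal (enn2real (RN_deriv Mhat Mstar x) powr 3) \<partial>Mhat)"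
    proof (rule nn_integral_cong_AE)
      show "AE x in Mhat. ennreal (norm ((1 / s x) ^ 3)) = ennreal (enn2real (RN_deriv Mhat Mstar x) powr 3)"
        using ae0
      proof eventually_elim
        case (elim x)
        then have r: "enn2real (RN_deriv Mhat Mstar x) = 1 / s x" unfolding \<rho>_def by simp
        have "(1 / s x) powr 3 = (1 / s x) ^ 3" using elim by (simp add: powr_numeral)
        then show ?case unfolding r using elim by simp
      qed
    qed
    also have "\<dots> < \<infinity>" by (rule mom1) simp
    finally show "(\<integral>\<^sup>+x. ennreal (norm ((1 / s x) ^ 3)) \<partial>Mhat) < \<infinity>" .
  qed
  have KL: "KL_divergence (exp 1) Mstar Mhat = (\<integral>x. ln (s x) \<partial>Mhat)"
    unfolding KL_divergence_def entropy_density_def s_def \<sigma>_def by (simp add: log_def o_def)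
  define K where "K = (\<integral>x. ln (s x) \<partial>Mhat)"
  have "\<epsilon> / 2 > 0" using e by simp
  from exists_theta(2)[OF P0 ms spos i3 j3 this] obtain \<theta> where
    th: "\<theta> > 0" "\<theta> \<le> 1" "integrable Mhat (\<lambda>x. s x powr \<theta>)"
      "(\<integral>x. s x powr \<theta> \<partial>Mhat) < exp (\<theta> * (K + \<epsilon> / 2))"
    unfolding K_def by blast
  define c where "c = K + \<epsilon> / 2"
  define q where "q = (\<integral>x. s x powr \<theta> \<partial>Mhat) / exp (\<theta> * c)"
  have q0: "q \<ge> 0" unfolding q_def by (simp add: s_def)
  have q1: "q < 1" unfolding q_def c_def using th(4) by simp
  obtain B0 where B0: "\<And>n t. \<bar>v n t\<bar> \<le> B0" using v_bdd by blast
  define B where "B = max B0 1"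
  have Bpos: "B > 0" unfolding B_def by simp
  have vB: "\<bar>v n t\<bar> \<le> B" for n t using B0[of n t] unfolding B_def by simp
  define \<Delta> where "\<Delta> = cstar - chat"
  have Dpos: "\<Delta> > 0" unfolding \<Delta>_def using costs by simp
  have ev1: "\<forall>\<^sub>F n in sequentially. 2 * B * q ^ n \<le> \<Delta> / 2"
  proof -
    have "(\<lambda>n. 2 * B * q ^ n) \<longlonglongrightarrow> 2 * B * 0"
      using q0 q1 by (intro tendsto_mult tendsto_const LIMSEQ_power_zero) auto
    then have "\<forall>\<^sub>F n in sequentially. 2 * B * q ^ n < \<Delta> / 2" using Dpos by (intro order_tendstoD(2)) auto
    then show ?thesis by eventually_elim simp
  qed
  have ev2: "\<forall>\<^sub>F n in sequentially. exp (- (real n * (\<epsilon> / 2))) \<le> \<Delta>\<^sup>2 / 4"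
  proof -
    have "filterlim (\<lambda>n. real n * (\<epsilon> / 2)) at_top sequentially"
      using e by (intro filterlim_at_top_mult_tendsto_pos[OF tendsto_const _ filterlim_real_sequentially]) auto
    then have "(\<lambda>n. exp (- (real n * (\<epsilon> / 2)))) \<longlonglongrightarrow> 0"
      by (intro filterlim_compose[OF exp_at_bot]) (simp add: filterlim_uminus_at_top[symmetric])
    then have "\<forall>\<^sub>F n in sequentially. exp (- (real n * (\<epsilon> / 2))) < \<Delta>\<^sup>2 / 4" using Dpos by (intro order_tendstoD(2)) auto
    then show ?thesis by eventually_elim simp
  qed
  show "\<forall>\<^sub>F n in sequentially. var (sample n Mstar) (\<lambda>xs. v n (Ln Mstar Mhat n xs))
             \<ge> exp (- (KL_divergence (exp 1) Mstar Mhat + \<epsilon>) * real n)"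
    using ev1 ev2
  proof eventually_elim
    case (elim n)
    let ?P0 = "PiM {..<n} (\<lambda>_. Mhat)" and ?P1 = "PiM {..<n} (\<lambda>_. Mstar)"
    define R where "R xs = (\<Prod>i\<in>{..<n}. \<rho> (xs i))" for xs
    define Q where "Q xs = (\<Prod>i\<in>{..<n}. s (xs i))" for xs
    define f where "f xs = v n (Ln Mstar Mhat n xs)" for xs
    have pP0: "prob_space ?P0" by (intro prob_space_PiM) (simp add: P0)
    have pP1: "prob_space ?P1" by (intro prob_space_PiM) (simp add: P1)
    have pd: "?P1 = density ?P0 R"
    proof -
      have "prob_space (density Mhat \<rho>)" using P1 d1 by simp
      from PiM_density_prod[OF P0 this m\<rho> finite_lessThan[of n]]
      have "PiM {..<n} (\<lambda>_. density Mhat \<rho>) = density ?P0 R" unfolding R_def .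
      then show ?thesis using d1 by simp
    qed
    have mR: "R \<in> borel_measurable ?P0" unfolding R_def using m\<rho> by measurable
    have mQ: "Q \<in> borel_measurable ?P0" unfolding Q_def using ms by measurable
    have mllr: "llr Mstar Mhat \<in> borel_measurable Mhat"
      unfolding llr_def using m\<rho>[unfolded \<rho>_def] by measurable
    have mLn: "Ln Mstar Mhat n \<in> borel_measurable ?P0" unfolding Ln_def using mllr by measurable
    have mv: "v n \<in> borel_measurable borel" using v_mono by (rule borel_measurable_mono)
    have mf: "f \<in> borel_measurable ?P0" unfolding f_def using measurable_compose[OF mLn mv] by simp
    have fb: "\<bar>f xs\<bar> \<le> B" for xs unfolding f_def by (rule vB)
    have aeP: "AE xs in ?P0. \<forall>i\<in>{..<n}. s (xs i) > 0 \<and> \<rho> (xs i) = ennreal (1 / s (xs i))"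
    proof (rule eventually_ball_finite)
      show "\<forall>i\<in>{..<n}. AE xs in ?P0. s (xs i) > 0 \<and> \<rho> (xs i) = ennreal (1 / s (xs i))"
      proof
        fix i assume i: "i \<in> {..<n}"
        have "AE x in Mhat. s x > 0 \<and> \<rho> x = ennreal (1 / s x)" using ae0 by eventually_elim auto
        then show "AE xs in ?P0. s (xs i) > 0 \<and> \<rho> (xs i) = ennreal (1 / s (xs i))"
          using i P0 by (intro AE_PiM_component) auto
      qed
    qed simp
    have ae: "AE xs in ?P0. 0 < Q xs \<and> R xs = ennreal (1 / Q xs)"
      using aeP
    proof eventually_elim
      case (elim xs)
      have Q0: "0 < Q xs" unfolding Q_def using elim by (intro prod_pos) auto
      have "R xs = (\<Prod>i\<in>{..<n}. ennreal (1 / s (xs i)))" unfolding R_def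
        using elim by (intro prod.cong) auto
      also have "\<dots> = ennreal (\<Prod>i\<in>{..<n}. 1 / s (xs i))" using elim s0 by (intro prod_ennreal) auto
      also have "(\<Prod>i\<in>{..<n}. 1 / s (xs i)) = 1 / Q xs" unfolding Q_def by (simp add: prod_dividef)
      finally show ?case using Q0 by simp
    qed
    define T where "T = exp (real n * c)"
    have Tpos: "T > 0" unfolding T_def by simp
    define t where "t = 2 * T / \<Delta>"
    have tpos: "t > 0" unfolding t_def using Tpos Dpos by simp
    have IC': "\<Delta> \<le> (\<integral>x. f x \<partial>?P1) - (\<integral>x. f x \<partial>?P0)"
      using IC[of n] unfolding \<Delta>_def f_def sample_def by simp
    have core: "\<Delta> \<le> t / 2 * var ?P1 f + T / (2 * t) + 2 * B * measure ?P0 {x\<in>space ?P0. T < Q x}"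
      by (rule core_ineq[OF pP0 pP1 pd mR mQ mf fb ae Tpos tpos IC'])
    have mk: "measure ?P0 {x\<in>space ?P0. T < Q x} \<le> q ^ n"
      using markov_prod[OF P0 ms s0 th(1) th(3), of n c] unfolding T_def Q_def q_def by simp
    define V where "V = var ?P1 f"
    have "2 * B * measure ?P0 {x\<in>space ?P0. T < Q x} \<le> 2 * B * q ^ n"
      using mk Bpos by simp
    with core elim(1) have "\<Delta> \<le> t / 2 * V + T / (2 * t) + \<Delta> / 2" unfolding V_def by linarith
    moreover have "t / 2 * V = T * V / \<Delta>" unfolding t_def by simp
    moreover have "T / (2 * t) = \<Delta> / 4" unfolding t_def using Tpos Dpos by (simp add: field_simps)
    ultimately have "\<Delta> / 4 \<le> T * V / \<Delta>" by linarith
    then have "\<Delta> * \<Delta> / 4 \<le> T * V" using Dpos by (simp add: field_simps)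
    then have V1: "(\<Delta>\<^sup>2 / 4) / T \<le> V" using Tpos by (simp add: field_simps power2_eq_square)
    have "exp (- (KL_divergence (exp 1) Mstar Mhat + \<epsilon>) * real n) = exp (- (real n * (\<epsilon> / 2))) / T"
      unfolding T_def KL c_def K_def[symmetric] by (simp add: exp_diff[symmetric] algebra_simps)
    also have "\<dots> \<le> (\<Delta>\<^sup>2 / 4) / T" using elim(2) Tpos by (intro divide_right_mono) auto
    also have "\<dots> \<le> V" by (rule V1)
    finally show ?case unfolding V_def f_def sample_def .
  qed
qed

end
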